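(* Let $G$ be the free group on $\{x,y\}$ and $k$ a field. Then the $k$-subalgebra of $k[G]$ generated by $x+x^{-1}$ and $y+y^{-1}$ is the free $k$-algebra on $\{x+x^{-1},y+y^{-1}\}$.
   Context: The free $k$-algebra on a set $X$ is the algebra of noncommutative polynomials in the variables $X$. *)

theory Defs
  imports Main
begin

text \<open>Letters of the free group on {x,y}: (g, e) where g = False means x, g = True means y,
  and e = True means the inverse letter.  Elements of the free group G are the freely
  reduced words over these letters; the product is concatenation followed by free reduction.\<close>

type_synonym letter = "bool \<times> bool"
type_synonym fgword = "letter list"

definition linv :: "letter \<Rightarrow> letter" where
  "linv c = (fst c, \<not> snd c)"

definition freduce :: "fgword \<Rightarrow> fgword" where
  "freduce xs = foldr (\<lambda>a w. case w of [] \<Rightarrow> [a] | b # w' \<Rightarrow> (if b = linv a then w' else a # w)) xs []"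

definition fg_mult :: "fgword \<Rightarrow> fgword \<Rightarrow> fgword" where
  "fg_mult u v = freduce (u @ v)"

text \<open>Group algebra k[G]: finitely supported functions G \<Rightarrow> k, with convolution product.\<close>
definition ga_delta :: "fgword \<Rightarrow> fgword \<Rightarrow> 'k::field" where
  "ga_delta g = (\<lambda>h. if h = g then 1 else 0)"

definition ga_add :: "(fgword \<Rightarrow> 'k::field) \<Rightarrow> (fgword \<Rightarrow> 'k) \<Rightarrow> fgword \<Rightarrow> 'k" where
  "ga_add f g = (\<lambda>h. f h + g h)"

definition ga_mult :: "(fgword \<Rightarrow> 'k::field) \<Rightarrow> (fgword \<Rightarrow> 'k) \<Rightarrow> fgword \<Rightarrow> 'k" where
  "ga_mult f g = (\<lambda>h. \<Sum>(u, v) \<in> {(u, v). f u \<noteq> 0 \<and> g v \<noteq> 0 \<and> fg_mult u v = h}. f u * g v)"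

definition ga_gen :: "bool \<Rightarrow> fgword \<Rightarrow> 'k::field" where
  "ga_gen c = ga_add (ga_delta [(c, False)]) (ga_delta [(c, True)])"

text \<open>Free k-algebra on two variables X (False) and Y (True): finitely supported functions
  from words over {X,Y} to k (noncommutative polynomials).\<close>
primrec ga_monomial :: "bool list \<Rightarrow> fgword \<Rightarrow> 'k::field" where
  "ga_monomial [] = ga_delta []"
| "ga_monomial (c # w) = ga_mult (ga_gen c) (ga_monomial w)"

definition nc_eval :: "(bool list \<Rightarrow> 'k::field) \<Rightarrow> fgword \<Rightarrow> 'k" where
  "nc_eval p = (\<lambda>h. \<Sum>w \<in> {w. p w \<noteq> 0}. p w * ga_monomial w h)"

end

theory Submission
  imports Defs
begin

lemma freduce_Nil[simp]: "freduce [] = []"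
  by (simp add: freduce_def)

lemma freduce_Cons: "freduce (a # xs) = (case freduce xs of [] \<Rightarrow> [a]
   | b # w' \<Rightarrow> (if b = linv a then w' else a # b # w'))"
  by (simp add: freduce_def split: list.split)

lemma freduce_len: "length (freduce xs) \<le> length xs"
  by (induction xs) (auto simp: freduce_Cons split: list.split)

lemma freduce_len_eq: "length (freduce xs) = length xs \<Longrightarrow> freduce xs = xs"
proof (induction xs)
  case Nil then show ?case by simp
next
  case (Cons a xs)
  show ?case
  proof (cases "freduce xs")
    case Nil
    then show ?thesis using Cons by (auto simp: freduce_Cons)
  next
    case (Cons b w')
    then show ?thesis using Cons.prems Cons.IH freduce_len[of xs]
      by (auto simp: freduce_Cons split: if_splits)
  qed
qed

lemma gen_nz: "ga_gen c u \<noteq> (0::'k::field) \<Longrightarrow> u = [(c,False)] \<or> u = [(c,True)]"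
  by (auto simp: ga_gen_def ga_add_def ga_delta_def split: if_splits)

lemma gen_F: "ga_gen c [(c,False)] = (1::'k::field)"
  by (auto simp: ga_gen_def ga_add_def ga_delta_def)

lemma monomial_len: "ga_monomial w h \<noteq> (0::'k::field) \<Longrightarrow> length h \<le> length w"
proof (induction w arbitrary: h)
  case Nil then show ?case by (auto simp: ga_delta_def split: if_splits)
next
  case (Cons c w)
  let ?S = "{(u, v). ga_gen c u \<noteq> (0::'k) \<and> ga_monomial w v \<noteq> (0::'k) \<and> fg_mult u v = h}"
  have "?S \<noteq> {}"
  proof
    assume e: "?S = {}"
    have "(ga_monomial (c # w) h :: 'k) = sum (\<lambda>(u, v). ga_gen c u * ga_monomial w v) ?S"
      by (simp add: ga_mult_def)
    then have "ga_monomial (c # w) h = (0::'k)" unfolding e by simp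
    then show False using Cons.prems by simp
  qed
  then obtain u v where uv: "ga_gen c u \<noteq> (0::'k)" "ga_monomial w v \<noteq> (0::'k)" "fg_mult u v = h"
    by blast
  have "length u = 1" using gen_nz[OF uv(1)] by auto
  moreover have "length v \<le> length w" using Cons.IH uv(2) by blast
  moreover have "length h \<le> length (u @ v)" using uv(3) freduce_len unfolding fg_mult_def by metis
  ultimately show ?case by simp
qed

definition pos :: "bool list \<Rightarrow> fgword" where "pos w = map (\<lambda>c. (c, False)) w"

lemma freduce_posw: "\<forall>x\<in>set h. \<not> snd x \<Longrightarrow> freduce h = h"
  by (induction h) (auto simp: freduce_Cons linv_def split: list.split)

lemma monomial_top: "length h = length w \<Longrightarrow> \<forall>x\<in>set h. \<not> snd x \<Longrightarrow>
   ga_monomial w h = (if h = pos w then (1::'k::field) else 0)"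
proof (induction w arbitrary: h)
  case Nil then show ?case by (auto simp: ga_delta_def pos_def)
next
  case (Cons c w)
  obtain c' h' where h: "h = (c', False) # h'"
    using Cons.prems by (cases h) auto
  have h'len: "length h' = length w" and h'pos: "\<forall>x\<in>set h'. \<not> snd x"
    using Cons.prems h by auto
  have IH: "ga_monomial w h' = (if h' = pos w then (1::'k) else 0)"
    using Cons.IH h'len h'pos by blast
  let ?S = "{(u, v). ga_gen c u \<noteq> (0::'k) \<and> ga_monomial w v \<noteq> (0::'k) \<and> fg_mult u v = h}"
  have sub: "?S \<subseteq> {([(c,False)], h')}"
  proof
    fix p assume "p \<in> ?S"
    then obtain u v where p: "p = (u,v)" and uv: "ga_gen c u \<noteq> (0::'k)"
       "ga_monomial w v \<noteq> (0::'k)" "fg_mult u v = h" by blast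
    have u1: "length u = 1" using gen_nz[OF uv(1)] by auto
    have "length v \<le> length w" using monomial_len uv(2) by blast
    moreover have "length (freduce (u @ v)) \<le> length (u @ v)" by (rule freduce_len)
    ultimately have "length (freduce (u @ v)) = length (u @ v)"
      using uv(3) Cons.prems u1 unfolding fg_mult_def by simp
    then have "u @ v = h" using freduce_len_eq uv(3) unfolding fg_mult_def by metis
    then show "p \<in> {([(c,False)], h')}" using gen_nz[OF uv(1)] h p by auto
  qed
  have val: "(ga_monomial (c # w) h :: 'k) = sum (\<lambda>(u, v). ga_gen c u * ga_monomial w v) ?S"
    by (simp add: ga_mult_def)
  show ?case
  proof (cases "c' = c \<and> h' = pos w")
    case True
    have fm: "fg_mult [(c,False)] h' = h"
      unfolding fg_mult_def using freduce_posw[of h] Cons.prems True h by simp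
    have "([(c,False)], h') \<in> ?S" using True IH gen_F[of c, where 'k='k] fm by simp
    then have "?S = {([(c,False)], h')}" using sub by blast
    then show ?thesis using val True IH gen_F[of c, where 'k='k] h by (simp add: pos_def)
  next
    case False
    have e: "?S = {}"
    proof -
      have "([(c,False)], h') \<notin> ?S"
      proof
        assume a: "([(c,False)], h') \<in> ?S"
        then have "ga_monomial w h' \<noteq> (0::'k)" by simp
        then have "h' = pos w" using IH by (simp split: if_splits)
        moreover have "freduce ((c,False) # h') = h" using a by (simp add: fg_mult_def)
        then have "c' = c" using freduce_posw[of "(c,False) # h'"] h'pos h by simp
        ultimately show False using False by simp
      qed
      then show ?thesis using sub by blast
    qed
    have z: "(ga_monomial (c # w) h :: 'k) = 0" unfolding val e by simp
    show ?thesis using z False h by (auto simp: pos_def)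
  qed
qed

theorem mainTheorem5:
  fixes p :: "bool list \<Rightarrow> 'k::field"
  assumes "finite {w. p w \<noteq> 0}"
    and "nc_eval p = (\<lambda>_. 0)"
  shows "p = (\<lambda>_. 0)"
proof (rule ccontr)
  let ?S = "{w. p w \<noteq> 0}"
  assume "p \<noteq> (\<lambda>_. 0)"
  then have ne: "?S \<noteq> {}" by auto
  define m where "m = Max (length ` ?S)"
  have "m \<in> length ` ?S" unfolding m_def using assms(1) ne by (intro Max_in) auto
  then obtain w where w: "w \<in> ?S" "length w = m" by auto
  have le: "\<And>w'. w' \<in> ?S \<Longrightarrow> length w' \<le> m" unfolding m_def using assms(1) by auto
  have posinj: "pos w' = pos w \<Longrightarrow> w' = w" for w'
  proof -
    assume "pos w' = pos w"
    then have "map fst (pos w') = map fst (pos w)" by simp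
    then show ?thesis by (simp add: pos_def comp_def)
  qed
  have eq: "p w' * ga_monomial w' (pos w) = (if w' = w then p w' else 0)" if "w' \<in> ?S" for w'
  proof (cases "length w' = m")
    case True
    have "ga_monomial w' (pos w) = (if pos w = pos w' then (1::'k) else 0)"
      by (rule monomial_top) (use True w in \<open>auto simp: pos_def\<close>)
    then show ?thesis using posinj by auto
  next
    case False
    then have "length w' < length (pos w)" using le[OF that] w by (simp add: pos_def)
    then have "ga_monomial w' (pos w) = (0::'k)" using monomial_len by fastforce
    then show ?thesis using w False by auto
  qed
  have "nc_eval p (pos w) = (\<Sum>w'\<in>?S. if w' = w then p w' else 0)"
    unfolding nc_eval_def using eq by (intro sum.cong) auto
  also have "\<dots> = p w" using assms(1) w by simp
  finally have "p w = 0" using assms(2) by simp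
  then show False using w by simp
qed

end
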